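(* Let $\delta\in\Lambda$ be any root ($\delta^2=-2$) and let $\delta=\delta_{\mathbb K_\gamma}+\delta_{\mathbb E_\gamma}$ with $\delta_{\mathbb K_\gamma}\in\mathbb K_\gamma^\vee$, $\delta_{\mathbb E_\gamma}\in\mathbb E_\gamma^\vee$ be its orthogonal decomposition. Then $\delta_{\mathbb K_\gamma}-d_1\in\mathbb K_\gamma$ and $\delta_{\mathbb E_\gamma}-d_2\in\mathbb E_\gamma$. In particular $\Lambda=\mathbb Z\delta+\mathbb K_\gamma\oplus\mathbb E_\gamma$.
   Context: $\Lambda=\mathbb U(2)\oplus\mathbb U\oplus\mathbb E_8(2)$ (Enriques lattice; $\mathbb U$ hyperbolic plane, $\mathbb E_8$ negative-definite, $(2)$ scaling by 2). Setting: $\iota$ is a fixed-point-free involution of a Kummer surface $K_{\tau,\tau'}=\mathrm{Km}(E_\tau\times E_{\tau'})$ with $\mathbf K\subset H^2(K_{\tau,\tau'},\mathbb Z)_-$, where $\mathbf K\cong\mathbb U(2)\oplus\mathbb U(2)$ is the image of $H^1(E_\tau,\mathbb Z)\otimes H^1(E_{\tau'},\mathbb Z)$; $\alpha$ is a marking with $\alpha(H^2_-)=\Lambda$; $\gamma\in A_{\mathbf K}\setminus\{0\}$ is the patching element of $\iota$. Put $\mathbb K_\gamma=\alpha(\mathbf K)\cong\mathbb U(2)\oplus\mathbb U(2)$ and $\mathbb E_\gamma=\alpha(\mathbf K^{\perp_{H^2_-}})$, the orthogonal complement of $\mathbb K_\gamma$ in $\Lambda$, which is isometric to $\mathbb E_8(2)$;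 both embed primitively in $\Lambda$, and $\Lambda=\mathbb Z(d_1+d_2)+\mathbb K_\gamma\oplus\mathbb E_\gamma\subset\mathbb K_\gamma^\vee\oplus\mathbb E_\gamma^\vee$ for some $d_1\in\mathbb K_\gamma^\vee\setminus\mathbb K_\gamma$, $d_2\in\mathbb E_\gamma^\vee\setminus\mathbb E_\gamma$. *)

theory Defs
  imports Complex_Main "HOL-Library.Function_Algebras"
begin

text \<open>Vectors of the ambient rational space Q^12 are modelled as functions nat => rat
  vanishing at indices >= 12.  The Enriques lattice Lambda = U(2) + U + E8(2) is Z^12
  inside Q^12 with the Gram matrix lam_gram.\<close>

type_synonym qvec = "nat \<Rightarrow> rat"

definition amb :: "qvec set" where
  "amb = {v. \<forall>i\<ge>12. v i = 0}"

definition smul :: "rat \<Rightarrow> qvec \<Rightarrow> qvec" where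
  "smul q v = (\<lambda>i. q * v i)"

definition U_gram :: "nat \<Rightarrow> nat \<Rightarrow> int" where
  "U_gram i j = (if (i = 0 \<and> j = 1) \<or> (i = 1 \<and> j = 0) then 1 else 0)"

definition E8_gram :: "nat \<Rightarrow> nat \<Rightarrow> int" where
  "E8_gram i j =
     (if i = j then -2
      else if {i, j} \<in> {{0,1},{1,2},{2,3},{3,4},{4,5},{5,6},{4,7}} then 1 else 0)"

definition lam_gram :: "nat \<Rightarrow> nat \<Rightarrow> int" where
  "lam_gram i j =
     (if i < 2 \<and> j < 2 then 2 * U_gram i j
      else if 2 \<le> i \<and> i < 4 \<and> 2 \<le> j \<and> j < 4 then U_gram (i - 2) (j - 2)
      else if 4 \<le> i \<and> i < 12 \<and> 4 \<le> j \<and> j < 12 then 2 * E8_gram (i - 4) (j - 4)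
      else 0)"

definition UU2_gram :: "nat \<Rightarrow> nat \<Rightarrow> int" where
  "UU2_gram i j =
     (if i < 2 \<and> j < 2 then 2 * U_gram i j
      else if 2 \<le> i \<and> i < 4 \<and> 2 \<le> j \<and> j < 4 then 2 * U_gram (i - 2) (j - 2)
      else 0)"

definition E82_gram :: "nat \<Rightarrow> nat \<Rightarrow> int" where
  "E82_gram i j = 2 * E8_gram i j"

definition bil :: "qvec \<Rightarrow> qvec \<Rightarrow> rat" where
  "bil v w = (\<Sum>i<12. \<Sum>j<12. of_int (lam_gram i j) * v i * w j)"

definition Lam :: "qvec set" where
  "Lam = {v \<in> amb. \<forall>i. v i \<in> \<int>}"

definition zspan :: "nat \<Rightarrow> (nat \<Rightarrow> qvec) \<Rightarrow> qvec set" where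
  "zspan n b = {(\<Sum>i<n. smul (of_int (c i)) (b i)) | c. True}"

definition isometric_to :: "qvec set \<Rightarrow> nat \<Rightarrow> (nat \<Rightarrow> nat \<Rightarrow> int) \<Rightarrow> bool" where
  "isometric_to S n G \<longleftrightarrow>
     (\<exists>b. (\<forall>i<n. b i \<in> amb) \<and> S = zspan n b
        \<and> (\<forall>c::nat \<Rightarrow> int. (\<Sum>i<n. smul (of_int (c i)) (b i)) = 0 \<longrightarrow> (\<forall>i<n. c i = 0))
        \<and> (\<forall>i<n. \<forall>j<n. bil (b i) (b j) = of_int (G i j)))"

text \<open>S tensor Q inside Q^12 (for a subgroup S).\<close>
definition rat_hull :: "qvec set \<Rightarrow> qvec set" where
  "rat_hull S = {v \<in> amb. \<exists>m::int. m > 0 \<and> smul (of_int m) v \<in> S}"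

definition dual_lat :: "qvec set \<Rightarrow> qvec set" where
  "dual_lat S = {v \<in> rat_hull S. \<forall>w\<in>S. bil v w \<in> \<int>}"

definition primitive_in_Lam :: "qvec set \<Rightarrow> bool" where
  "primitive_in_Lam S \<longleftrightarrow> S \<subseteq> Lam \<and>
     (\<forall>v\<in>Lam. \<forall>m::int. m \<noteq> 0 \<longrightarrow> smul (of_int m) v \<in> S \<longrightarrow> v \<in> S)"

definition orth_Lam :: "qvec set \<Rightarrow> qvec set" where
  "orth_Lam S = {v \<in> Lam. \<forall>w\<in>S. bil v w = 0}"

end

theory Submission
  imports Defs
begin

lemma fun_sum_apply: "(\<Sum>i\<in>A. f i) x = (\<Sum>i\<in>A. (f i) x)" for f :: "'a \<Rightarrow> 'b \<Rightarrow> 'c::comm_monoid_add"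
  by (induction A rule: infinite_finite_induct) auto
lemma E8_gram_sym: "E8_gram i j = E8_gram j i"
  unfolding E8_gram_def by (simp add: insert_commute)
lemma U_gram_sym: "U_gram i j = U_gram j i"
  unfolding U_gram_def by auto
lemma lam_gram_sym: "lam_gram i j = lam_gram j i"
  unfolding lam_gram_def by (simp add: E8_gram_sym U_gram_sym conj_commute)
lemma bil_add_left: "bil (v + w) u = bil v u + bil w u"
  unfolding bil_def by (simp add: algebra_simps sum.distrib)

lemma bil_smul_left: "bil (smul q v) w = q * bil v w"
  unfolding bil_def smul_def by (simp add: algebra_simps sum_distrib_left)

lemma bil_sym: "bil v w = bil w v"
  unfolding bil_def
  by (subst sum.swap) (simp add: lam_gram_sym mult.commute mult.left_commute)

lemma bil_zero_left[simp]: "bil 0 w = 0" unfolding bil_def by simp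

lemma bil_neg_left: "bil (- v) w = - bil v w"
  unfolding bil_def by (simp add: sum_negf[symmetric])

lemma bil_diff_left: "bil (v - w) u = bil v u - bil w u"
  using bil_add_left[of v "-w" u] bil_neg_left[of w u] by simp

lemma bil_add_right: "bil u (v + w) = bil u v + bil u w"
  by (metis bil_sym bil_add_left)
lemma bil_smul_right: "bil w (smul q v) = q * bil w v"
  by (metis bil_sym bil_smul_left)

lemma bil_sum_left: "bil (\<Sum>i\<in>A. f i) w = (\<Sum>i\<in>A. bil (f i) w)"
proof (induction A rule: infinite_finite_induct)
  case (insert x F)
  then show ?case by (simp only: sum.insert[OF insert.hyps] bil_add_left insert.IH)
next
  case (infinite A)
  then show ?case by (metis sum.infinite bil_zero_left)
qed (simp only: sum.empty bil_zero_left)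
lemma bil_sum_right: "bil w (\<Sum>i\<in>A. f i) = (\<Sum>i\<in>A. bil w (f i))"
proof -
  have "bil w (\<Sum>i\<in>A. f i) = bil (\<Sum>i\<in>A. f i) w" by (rule bil_sym)
  also have "\<dots> = (\<Sum>i\<in>A. bil (f i) w)" by (rule bil_sum_left)
  also have "\<dots> = (\<Sum>i\<in>A. bil w (f i))" by (intro sum.cong refl bil_sym)
  finally show ?thesis .
qed


lemma bil_comb: "bil (\<Sum>i<n. smul (c i) (b i)) (\<Sum>j<n. smul (d j) (b j))
   = (\<Sum>i<n. \<Sum>j<n. c i * d j * bil (b i) (b j))"
  by (simp add: bil_sum_left bil_sum_right bil_smul_left bil_smul_right sum_distrib_left mult.assoc)
     (rule sum.swap[THEN trans], simp add: ac_simps)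
lemma sum4: "(\<Sum>i<4. f i) = f 0 + f 1 + f 2 + (f (3::nat)::'a::comm_monoid_add)"
  by (simp add: lessThan_nat_numeral ac_simps)
lemma sum8: "(\<Sum>i<8. f i) = f 0 + f 1 + f 2 + f 3 + f 4 + f 5 + f 6 + (f (7::nat)::'a::comm_monoid_add)"
  by (simp add: lessThan_nat_numeral ac_simps)


lemma even_form:
  fixes G :: "nat \<Rightarrow> nat \<Rightarrow> int"
  assumes sym: "\<And>i j. G i j = G j i" and dg: "\<And>i. even (G i i)"
  shows "even (\<Sum>i<n. \<Sum>j<n. c i * c j * G i j)"
proof (induction n)
  case 0 show ?case by simp
next
  case (Suc n)
  have a: "(\<Sum>i<n. c i * c n * G i n) = (\<Sum>j<n. c n * c j * G n j)"
    by (intro sum.cong refl) (simp add: sym ac_simps)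
  have "(\<Sum>i<Suc n. \<Sum>j<Suc n. c i * c j * G i j)
      = (\<Sum>i<n. \<Sum>j<n. c i * c j * G i j) + (\<Sum>i<n. c i * c n * G i n)
        + (\<Sum>j<n. c n * c j * G n j) + c n * c n * G n n"
    by (simp add: sum.distrib)
  also have "\<dots> = (\<Sum>i<n. \<Sum>j<n. c i * c j * G i j) + 2 * (\<Sum>j<n. c n * c j * G n j)
        + c n * c n * G n n" unfolding a by simp
  finally show ?case using Suc dg by simp
qed

lemma mem_zspan: "x \<in> zspan n b \<longleftrightarrow> (\<exists>c. x = (\<Sum>i<n. smul (of_int (c i)) (b i)))"
  unfolding zspan_def by auto

lemma zspan_0: "0 \<in> zspan n b"
  unfolding mem_zspan by (rule exI[of _ "\<lambda>_. 0"]) (simp add: fun_eq_iff fun_sum_apply smul_def)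

lemma zspan_add: "x \<in> zspan n b \<Longrightarrow> y \<in> zspan n b \<Longrightarrow> x + y \<in> zspan n b"
  unfolding mem_zspan
proof (elim exE)
  fix c d assume "x = (\<Sum>i<n. smul (of_int (c i)) (b i))" "y = (\<Sum>i<n. smul (of_int (d i)) (b i))"
  then show "\<exists>e. x + y = (\<Sum>i<n. smul (of_int (e i)) (b i))"
    by (intro exI[of _ "\<lambda>i. c i + d i"]) (simp add: fun_eq_iff fun_sum_apply smul_def sum.distrib[symmetric] algebra_simps)
qed

lemma zspan_smul: "x \<in> zspan n b \<Longrightarrow> smul (of_int a) x \<in> zspan n b"
  unfolding mem_zspan
proof (elim exE)
  fix c assume "x = (\<Sum>i<n. smul (of_int (c i)) (b i))"
  then show "\<exists>e. smul (of_int a) x = (\<Sum>i<n. smul (of_int (e i)) (b i))"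
    by (intro exI[of _ "\<lambda>i. a * c i"]) (simp add: fun_eq_iff fun_sum_apply smul_def sum_distrib_left algebra_simps)
qed

lemma zspan_diff: "x \<in> zspan n b \<Longrightarrow> y \<in> zspan n b \<Longrightarrow> x - y \<in> zspan n b"
proof -
  assume "x \<in> zspan n b" "y \<in> zspan n b"
  then have "x + smul (of_int (-1)) y \<in> zspan n b" by (intro zspan_add zspan_smul)
  moreover have "x + smul (of_int (-1)) y = x - y" by (simp add: fun_eq_iff smul_def)
  ultimately show ?thesis by simp
qed

lemma Lam_add: "x \<in> Lam \<Longrightarrow> y \<in> Lam \<Longrightarrow> x + y \<in> Lam"
  unfolding Lam_def amb_def by auto
lemma Lam_smul: "x \<in> Lam \<Longrightarrow> smul (of_int a) x \<in> Lam"
  unfolding Lam_def amb_def smul_def by auto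
lemma Lam_diff: "x \<in> Lam \<Longrightarrow> y \<in> Lam \<Longrightarrow> x - y \<in> Lam"
  unfolding Lam_def amb_def by auto

lemma coordK:
  assumes "\<forall>i<4. \<forall>j<4. bil (b i) (b j) = of_int (UU2_gram i j)"
  shows "bil (\<Sum>i<4. smul (q i) (b i)) (b 0) = 2 * q 1"
    "bil (\<Sum>i<4. smul (q i) (b i)) (b 1) = 2 * q 0"
    "bil (\<Sum>i<4. smul (q i) (b i)) (b 2) = 2 * q 3"
    "bil (\<Sum>i<4. smul (q i) (b i)) (b 3) = 2 * q 2"
  using assms by (simp_all add: sum4 bil_add_left bil_smul_left UU2_gram_def U_gram_def)

lemma gram_sum:
  assumes "\<forall>i<n. \<forall>j<n. bil (b i) (b j) = of_int (G i j)"
  shows "bil (\<Sum>i<n. smul (of_int (c i)) (b i)) (\<Sum>i<n. smul (of_int (c i)) (b i))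
     = (\<Sum>i<n. \<Sum>j<n. of_int (c i) * of_int (c j) * of_int (G i j))"
  unfolding bil_comb using assms by (intro sum.cong refl) auto
lemma zspan_basis: "j < n \<Longrightarrow> b j \<in> zspan n b"
  unfolding mem_zspan
proof (intro exI[of _ "\<lambda>i. if i = j then 1 else 0"] ext)
  fix x assume "j < n"
  have "(\<Sum>i<n. smul (of_int (if i = j then 1 else 0)) (b i)) x = (\<Sum>i<n. if i = j then b i x else 0)"
    unfolding fun_sum_apply by (intro sum.cong refl) (simp add: smul_def)
  also have "\<dots> = b j x" using \<open>j < n\<close> by (simp add: sum.delta)
  finally show "b j x = (\<Sum>i<n. smul (of_int (if i = j then 1 else 0)) (b i)) x" by simp
qed

lemma form_4:
  assumes "\<forall>i<n. \<forall>j<n. bil (b i) (b j) = of_int (2 * G i j)"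
    and "\<And>i j. G i j = G j i" and "\<And>i. even (G i i)"
    and "x \<in> zspan n b"
  shows "\<exists>t::int. bil x x = of_int (4 * t)"
proof -
  obtain c where x: "x = (\<Sum>i<n. smul (of_int (c i)) (b i))" using assms(4) mem_zspan by blast
  have "bil x x = (\<Sum>i<n. \<Sum>j<n. of_int (c i) * of_int (c j) * of_int (2 * G i j))"
    unfolding x by (rule gram_sum[OF assms(1)])
  also have "\<dots> = of_int (2 * (\<Sum>i<n. \<Sum>j<n. c i * c j * G i j))"
    by (simp add: sum_distrib_left ac_simps)
  finally have e: "bil x x = of_int (2 * (\<Sum>i<n. \<Sum>j<n. c i * c j * G i j))" .
  have "even (\<Sum>i<n. \<Sum>j<n. c i * c j * G i j)"
    by (rule even_form) (use assms(2,3) in auto)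
  then obtain t where "(\<Sum>i<n. \<Sum>j<n. c i * c j * G i j) = 2 * t"
    by (auto elim: evenE)
  then show ?thesis using e by (intro exI[of _ t]) simp
qed

theorem lemma3p11:
  fixes K E :: "qvec set" and d1 d2 \<delta> :: qvec
  assumes "K \<subseteq> Lam"
    and "isometric_to K 4 UU2_gram"
    and "E = orth_Lam K"
    and "isometric_to E 8 E82_gram"
    and "primitive_in_Lam K"
    and "primitive_in_Lam E"
    and "d1 \<in> dual_lat K - K"
    and "d2 \<in> dual_lat E - E"
    and "Lam = {smul (of_int m) (d1 + d2) + k + e | m k e. k \<in> K \<and> e \<in> E}"
    and "\<delta> \<in> Lam"
    and "bil \<delta> \<delta> = -2"
  shows "(\<forall>\<delta>K \<delta>E. \<delta> = \<delta>K + \<delta>E \<and> \<delta>K \<in> dual_lat K \<and> \<delta>E \<in> dual_lat E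
            \<longrightarrow> \<delta>K - d1 \<in> K \<and> \<delta>E - d2 \<in> E)
         \<and> Lam = {smul (of_int m) \<delta> + k + e | m k e. k \<in> K \<and> e \<in> E}"
proof -
  obtain bK where bK: "K = zspan 4 bK" "\<forall>i<4. \<forall>j<4. bil (bK i) (bK j) = of_int (UU2_gram i j)"
    using assms(2) unfolding isometric_to_def by blast
  obtain bE where bE: "E = zspan 8 bE" "\<forall>i<8. \<forall>j<8. bil (bE i) (bE j) = of_int (E82_gram i j)"
    using assms(4) unfolding isometric_to_def by blast
  have K0: "0 \<in> K" and Kadd: "\<And>x y. x \<in> K \<Longrightarrow> y \<in> K \<Longrightarrow> x + y \<in> K"
    and Kdiff: "\<And>x y. x \<in> K \<Longrightarrow> y \<in> K \<Longrightarrow> x - y \<in> K"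
    and Ksmul: "\<And>x a. x \<in> K \<Longrightarrow> smul (of_int a) x \<in> K"
    unfolding bK(1) by (auto intro: zspan_0 zspan_add zspan_diff zspan_smul)
  have E0: "0 \<in> E" and Eadd: "\<And>x y. x \<in> E \<Longrightarrow> y \<in> E \<Longrightarrow> x + y \<in> E"
    and Ediff: "\<And>x y. x \<in> E \<Longrightarrow> y \<in> E \<Longrightarrow> x - y \<in> E"
    and Esmul: "\<And>x a. x \<in> E \<Longrightarrow> smul (of_int a) x \<in> E"
    unfolding bE(1) by (auto intro: zspan_0 zspan_add zspan_diff zspan_smul)
  have EL: "E \<subseteq> Lam" using assms(3) unfolding orth_Lam_def by auto
  have Eorth: "\<And>e k. e \<in> E \<Longrightarrow> k \<in> K \<Longrightarrow> bil e k = 0"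
    using assms(3) unfolding orth_Lam_def by auto
  have hullE: "\<And>v k. v \<in> rat_hull E \<Longrightarrow> k \<in> K \<Longrightarrow> bil v k = 0"
  proof -
    fix v k assume "v \<in> rat_hull E" "k \<in> K"
    then obtain m :: int where m: "m > 0" "smul (of_int m) v \<in> E" unfolding rat_hull_def by auto
    then have "bil (smul (of_int m) v) k = 0" using Eorth \<open>k \<in> K\<close> by blast
    then show "bil v k = 0" using m(1) by (simp add: bil_smul_left)
  qed
  have uniq: "\<And>w (p::int). p > 0 \<Longrightarrow> smul (of_int p) w \<in> K \<Longrightarrow> (\<forall>k\<in>K. bil w k = 0) \<Longrightarrow> w = 0"
  proof -
    fix w and p :: int assume p: "p > 0" "smul (of_int p) w \<in> K" and o: "\<forall>k\<in>K. bil w k = 0"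
    obtain c where c: "smul (of_int p) w = (\<Sum>i<4. smul (of_int (c i)) (bK i))"
      using p(2) bK(1) mem_zspan by blast
    have bKK: "\<And>j. j < 4 \<Longrightarrow> bK j \<in> K" unfolding bK(1) by (rule zspan_basis)
    have z: "bil (smul (of_int p) w) (bK j) = 0" if "j < 4" for j
      using o bKK[OF that] by (simp add: bil_smul_left)
    have "c 0 = 0" "c 1 = 0" "c 2 = 0" "c 3 = 0"
      using z[of 0] z[of 1] z[of 2] z[of 3] coordK[OF bK(2), of "\<lambda>i. of_int (c i)"] unfolding c by auto
    then have "smul (of_int p) w = 0" unfolding c by (simp add: sum4 fun_eq_iff smul_def)
    then show "w = 0" using p(1) by (simp add: fun_eq_iff smul_def)
  qed
  have twod1: "smul 2 d1 \<in> K"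
  proof -
    have d1h: "d1 \<in> rat_hull K" and d1i: "\<forall>w\<in>K. bil d1 w \<in> \<int>" using assms(7) unfolding dual_lat_def by auto
    obtain p :: int where p: "p > 0" "smul (of_int p) d1 \<in> K" using d1h unfolding rat_hull_def by auto
    obtain c where c: "smul (of_int p) d1 = (\<Sum>i<4. smul (of_int (c i)) (bK i))"
      using p(2) bK(1) mem_zspan by blast
    have bKK: "\<And>j. j < 4 \<Longrightarrow> bK j \<in> K" unfolding bK(1) by (rule zspan_basis)
    have co: "of_int p * bil d1 (bK j) = bil (\<Sum>i<4. smul (of_int (c i)) (bK i)) (bK j)" for j
      unfolding c[symmetric] by (simp add: bil_smul_left)
    have ints: "\<exists>a::int. 2 * of_int (c i) / of_int p = (of_int a :: rat)" if "i < 4" for i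
    proof -
      have jj: "\<exists>j<4. bil (\<Sum>i<4. smul (of_int (c i)) (bK i)) (bK j) = 2 * of_int (c i)"
        using that coordK[OF bK(2), of "\<lambda>i. of_int (c i)"]
        by (auto simp: less_Suc_eq numeral_eq_Suc) 
      then obtain j where j: "j < 4" "of_int p * bil d1 (bK j) = 2 * of_int (c i)" using co by metis
      obtain a where "bil d1 (bK j) = of_int a" using d1i bKK[OF j(1)] Ints_cases by metis
      then show ?thesis using j(2) p(1) by (intro exI[of _ a]) (simp add: field_simps)
    qed
    then obtain a where a: "\<And>i. i < 4 \<Longrightarrow> 2 * of_int (c i) / of_int p = (of_int (a i) :: rat)" by metis
    have "smul 2 d1 = (\<Sum>i<4. smul (of_int (a i)) (bK i))"
    proof
      fix x
      have "smul 2 d1 x = 2 / of_int p * (smul (of_int p) d1 x)" using p(1) by (simp add: smul_def)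
      also have "\<dots> = (\<Sum>i<4. 2 / of_int p * (of_int (c i) * bK i x))"
        unfolding c by (simp add: fun_sum_apply smul_def sum_distrib_left)
      also have "\<dots> = (\<Sum>i<4. of_int (a i) * bK i x)"
        by (intro sum.cong refl) (simp add: a[symmetric])
      finally show "smul 2 d1 x = (\<Sum>i<4. smul (of_int (a i)) (bK i)) x"
        by (simp add: fun_sum_apply smul_def)
    qed
    then show ?thesis unfolding bK(1) mem_zspan by blast
  qed
  have d2h: "d2 \<in> rat_hull E" using assms(8) unfolding dual_lat_def by auto
  have d12L: "d1 + d2 \<in> Lam"
  proof -
    have "d1 + d2 = smul (of_int 1) (d1 + d2) + 0 + 0" by (simp add: fun_eq_iff smul_def)
    then have "d1 + d2 \<in> {smul (of_int m) (d1 + d2) + k + e | m k e. k \<in> K \<and> e \<in> E}"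
      using K0 E0 by blast
    then show ?thesis using assms(9) by simp
  qed
  have twod2: "smul 2 d2 \<in> E"
  proof -
    have eq: "smul 2 d2 = smul (of_int 2) (d1 + d2) - smul 2 d1" by (simp add: fun_eq_iff smul_def algebra_simps)
    have "smul 2 d2 \<in> Lam" unfolding eq using Lam_diff Lam_smul d12L twod1 assms(1) by blast
    moreover have "\<forall>k\<in>K. bil (smul 2 d2) k = 0" using hullE[OF d2h] by (simp add: bil_smul_left)
    ultimately show ?thesis unfolding assms(3) orth_Lam_def by blast
  qed
  obtain m k0 e0 where del: "\<delta> = smul (of_int m) (d1 + d2) + k0 + e0" "k0 \<in> K" "e0 \<in> E"
    using assms(9,10) by blast
  have modd: "odd m"
  proof
    assume "even m"
    then obtain n where n: "m = 2 * n" by (auto elim: evenE)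
    define k' where "k' = smul (of_int n) (smul 2 d1) + k0"
    define e' where "e' = smul (of_int n) (smul 2 d2) + e0"
    have k'K: "k' \<in> K" unfolding k'_def using Kadd Ksmul twod1 del(2) by blast
    have e'E: "e' \<in> E" unfolding e'_def using Eadd Esmul twod2 del(3) by blast
    have de: "\<delta> = k' + e'" unfolding k'_def e'_def del(1) n by (simp add: fun_eq_iff smul_def algebra_simps)
    have o1: "bil e' k' = 0" using Eorth e'E k'K by blast
    have o2: "bil k' e' = 0" using o1 bil_sym by metis
    have bb: "bil \<delta> \<delta> = bil k' k' + bil e' e'"
      unfolding de by (simp add: bil_add_left bil_add_right o1 o2)
    define GK where "GK = (\<lambda>i j. if i < 2 \<and> j < 2 then U_gram i j
      else if 2 \<le> i \<and> i < 4 \<and> 2 \<le> j \<and> j < 4 then U_gram (i - 2) (j - 2) else 0)"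
    have "\<exists>t::int. bil k' k' = of_int (4 * t)"
    proof (rule form_4[of 4 bK GK])
      show "\<forall>i<4. \<forall>j<4. bil (bK i) (bK j) = of_int (2 * GK i j)"
        using bK(2) by (simp add: GK_def UU2_gram_def)
      show "GK i j = GK j i" for i j unfolding GK_def using U_gram_sym by auto
      show "even (GK i i)" for i unfolding GK_def U_gram_def by auto
      show "k' \<in> zspan 4 bK" using k'K bK(1) by simp
    qed
    then obtain t1 where t1: "bil k' k' = of_int (4 * t1)" by blast
    have "\<exists>t::int. bil e' e' = of_int (4 * t)"
    proof (rule form_4[of 8 bE E8_gram])
      show "\<forall>i<8. \<forall>j<8. bil (bE i) (bE j) = of_int (2 * E8_gram i j)"
        using bE(2) by (simp add: E82_gram_def)
      show "E8_gram i j = E8_gram j i" for i j by (rule E8_gram_sym)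
      show "even (E8_gram i i)" for i unfolding E8_gram_def by auto
      show "e' \<in> zspan 8 bE" using e'E bE(1) by simp
    qed
    then obtain t2 where t2: "bil e' e' = of_int (4 * t2)" by blast
    have "(-2::rat) = of_int (4 * t1 + 4 * t2)" using assms(11) bb t1 t2 by simp
    then have "(-2::int) = 4 * t1 + 4 * t2" by linarith
    then show False by presburger
  qed
  then obtain n where mn: "m = 2 * n + 1" by (auto elim: oddE)
  have P1: "\<forall>\<delta>K \<delta>E. \<delta> = \<delta>K + \<delta>E \<and> \<delta>K \<in> dual_lat K \<and> \<delta>E \<in> dual_lat E
            \<longrightarrow> \<delta>K - d1 \<in> K \<and> \<delta>E - d2 \<in> E"
  proof (intro allI impI, elim conjE)
    fix \<delta>K \<delta>E assume h: "\<delta> = \<delta>K + \<delta>E" "\<delta>K \<in> dual_lat K" "\<delta>E \<in> dual_lat E"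
    obtain p :: int where p: "p > 0" "smul (of_int p) \<delta>K \<in> K"
      using h(2) unfolding dual_lat_def rat_hull_def by auto
    have dEh: "\<delta>E \<in> rat_hull E" using h(3) unfolding dual_lat_def by auto
    define w where "w = \<delta>K - smul (of_int m) d1 - k0"
    have w1: "smul (of_int (2 * p)) w \<in> K"
    proof -
      have "smul (of_int (2 * p)) w = smul (of_int 2) (smul (of_int p) \<delta>K)
          - smul (of_int (p * m)) (smul 2 d1) - smul (of_int (2 * p)) k0"
        unfolding w_def by (simp add: fun_eq_iff smul_def algebra_simps)
      then show ?thesis using Kdiff Ksmul p(2) twod1 del(2) by metis
    qed
    have weq: "w = smul (of_int m) d2 + e0 - \<delta>E"
      using h(1) del(1) unfolding w_def by (simp add: fun_eq_iff smul_def algebra_simps)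
    have w2: "\<forall>k\<in>K. bil w k = 0"
    proof
      fix k assume "k \<in> K"
      then show "bil w k = 0" unfolding weq
        using hullE[OF d2h] hullE[OF dEh] Eorth[OF del(3)]
        by (simp add: bil_add_left bil_diff_left bil_smul_left)
    qed
    have "w = 0" using uniq[of "2 * p" w] p(1) w1 w2 by simp
    then have dK: "\<delta>K = smul (of_int m) d1 + k0" unfolding w_def by (simp add: fun_eq_iff diff_eq_eq add.commute)
    have "\<delta>K - d1 = smul (of_int n) (smul 2 d1) + k0"
      unfolding dK mn by (simp add: fun_eq_iff smul_def algebra_simps)
    then have 1: "\<delta>K - d1 \<in> K" using Kadd Ksmul twod1 del(2) by metis
    have "\<delta>E - d2 = smul (of_int n) (smul 2 d2) + e0"
      using h(1) del(1) dK unfolding mn by (simp add: fun_eq_iff smul_def algebra_simps)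
    then have 2: "\<delta>E - d2 \<in> E" using Eadd Esmul twod2 del(3) by metis
    show "\<delta>K - d1 \<in> K \<and> \<delta>E - d2 \<in> E" using 1 2 by blast
  qed
  have P2: "Lam = {smul (of_int m) \<delta> + k + e | m k e. k \<in> K \<and> e \<in> E}"
  proof
    show "Lam \<subseteq> {smul (of_int m) \<delta> + k + e | m k e. k \<in> K \<and> e \<in> E}"
    proof
      fix v assume "v \<in> Lam"
      then obtain a k e where v: "v = smul (of_int a) (d1 + d2) + k + e" "k \<in> K" "e \<in> E"
        using assms(9) by blast
      define k' where "k' = k + smul (of_int (- (a * n))) (smul 2 d1) + smul (of_int (- a)) k0"
      define e' where "e' = e + smul (of_int (- (a * n))) (smul 2 d2) + smul (of_int (- a)) e0"
      have "k' \<in> K" unfolding k'_def using Kadd Ksmul v(2) twod1 del(2) by metis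
      moreover have "e' \<in> E" unfolding e'_def using Eadd Esmul v(3) twod2 del(3) by metis
      moreover have "v = smul (of_int a) \<delta> + k' + e'"
        unfolding v(1) del(1) k'_def e'_def mn by (simp add: fun_eq_iff smul_def algebra_simps)
      ultimately show "v \<in> {smul (of_int m) \<delta> + k + e | m k e. k \<in> K \<and> e \<in> E}" by blast
    qed
    show "{smul (of_int m) \<delta> + k + e | m k e. k \<in> K \<and> e \<in> E} \<subseteq> Lam"
      using Lam_add Lam_smul assms(1,10) EL by blast
  qed
  show ?thesis using P1 P2 by blast
qed

end
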